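(* Let $\mathfrak g=\mathfrak k\oplus\mathfrak m$ be a Pauli-spanned Cartan decomposition and let $b_1,\dots,b_d\in\tilde{\mathfrak m}$, $d\ge2$, be pairwise commuting Pauli strings (spanning an Abelian subalgebra $\mathfrak b\subseteq\mathfrak m$), all lying in the same connected component of the frustration graph of $\mathfrak g$. Assume the basis has no associative structure, meaning that for no three distinct indices $p,q,s$ is $i\,b_pb_qb_s\in\mathfrak m$. Then for every $1\le r\le d$, $$|\tilde{\mathfrak k}^r_{1\dots r-1}|=|\tilde{\mathfrak k}^1_{2\dots d}|+(d-r)\,|\tilde{\mathfrak k}^{12}_{3\dots d}|.$$
   Context: Pauli strings on $n$ qubits are tensor products of $I,X,Y,Z$, not all identity; two Pauli strings either commute or anticommute. A Pauli-spanned Cartan decomposition is $\mathfrak g=\mathfrak k\oplus\mathfrak m\subseteq\mathfrak{su}(2^n)$ with $\mathfrak k=\mathrm{span}_{i\mathbb R}\tilde{\mathfrak k}$, $\mathfrak m=\mathrm{span}_{i\mathbb R}\tilde{\mathfrak m}$, $\mathfrak g=\mathrm{span}_{i\mathbb R}\tilde{\mathfrak g}$ with $\tilde{\mathfrak g}=\tilde{\mathfrak k}\sqcup\tilde{\mathfrak m}$ the set of all Pauli strings (up to phase) $\sigma$ with $i\sigma\in\mathfrak g$, and $[\mathfrak k,\mathfrak k]\subseteq\mathfrak k$, $[\mathfrak m,\mathfrak m]\subseteq\mathfrak k$, $[\mathfrak k,\mathfrak m]\subseteq\mathfrak m$. The frustration graph of $\mathfrak g$ has vertex set $\tilde{\mathfrak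 g}$, with edges between anticommuting pairs. For disjoint index lists, $\tilde{\mathfrak k}^{i_1i_2\dots}_{j_1j_2\dots}$ is the set of $k\in\tilde{\mathfrak k}$ anticommuting with every $b_{i_p}$ and commuting with every $b_{j_q}$ (no condition on other indices); e.g. $\tilde{\mathfrak k}^1_{2\dots d}$ anticommutes with $b_1$ and commutes with $b_2,\dots,b_d$, and $\tilde{\mathfrak k}^{12}_{3\dots d}$ anticommutes with $b_1,b_2$ and commutes with $b_3,\dots,b_d$. *)

theory Defs
  imports Main
begin

text \<open>Single-qubit Pauli operators, modulo phase.\<close>
datatype pauli1 = PI | PX | PY | PZ

fun mult1 :: "pauli1 \<Rightarrow> pauli1 \<Rightarrow> pauli1" where
  "mult1 PI b = b"
| "mult1 a PI = a"
| "mult1 PX PX = PI" | "mult1 PY PY = PI" | "mult1 PZ PZ = PI"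
| "mult1 PX PY = PZ" | "mult1 PY PX = PZ"
| "mult1 PY PZ = PX" | "mult1 PZ PY = PX"
| "mult1 PZ PX = PY" | "mult1 PX PZ = PY"

definition is_pauli :: "nat \<Rightarrow> pauli1 list \<Rightarrow> bool" where
  "is_pauli n s \<longleftrightarrow> length s = n \<and> (\<exists>a\<in>set s. a \<noteq> PI)"

definition pmult :: "pauli1 list \<Rightarrow> pauli1 list \<Rightarrow> pauli1 list" where
  "pmult s t = map2 mult1 s t"

definition anticomm1 :: "pauli1 \<Rightarrow> pauli1 \<Rightarrow> bool" where
  "anticomm1 a b \<longleftrightarrow> a \<noteq> PI \<and> b \<noteq> PI \<and> a \<noteq> b"

definition anticomm :: "pauli1 list \<Rightarrow> pauli1 list \<Rightarrow> bool" where
  "anticomm s t \<longleftrightarrow> odd (length (filter (\<lambda>(a,b). anticomm1 a b) (zip s t)))"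

text \<open>Pauli-spanned Cartan decomposition g = k + m of a subalgebra of su(2^n), given by the
  Pauli sets K (= k tilde) and M (= m tilde).  Since distinct Pauli strings are linearly
  independent and [i s, i t] is 0 if s,t commute and a nonzero multiple of i (s t) otherwise,
  the span conditions [k,k] \<subseteq> k, [m,m] \<subseteq> k, [k,m] \<subseteq> m are exactly the closure
  conditions below.\<close>
definition pauli_cartan :: "nat \<Rightarrow> pauli1 list set \<Rightarrow> pauli1 list set \<Rightarrow> bool" where
  "pauli_cartan n K M \<longleftrightarrow>
     (\<forall>s\<in>K \<union> M. is_pauli n s) \<and> K \<inter> M = {} \<and>
     (\<forall>a\<in>K. \<forall>c\<in>K. anticomm a c \<longrightarrow> pmult a c \<in> K) \<and>
     (\<forall>a\<in>M. \<forall>c\<in>M. anticomm a c \<longrightarrow> pmult a c \<in> K) \<and>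
     (\<forall>a\<in>K. \<forall>c\<in>M. anticomm a c \<longrightarrow> pmult a c \<in> M)"

definition frust_edge :: "pauli1 list set \<Rightarrow> pauli1 list \<Rightarrow> pauli1 list \<Rightarrow> bool" where
  "frust_edge G s t \<longleftrightarrow> s \<in> G \<and> t \<in> G \<and> anticomm s t"

definition same_component :: "pauli1 list set \<Rightarrow> pauli1 list \<Rightarrow> pauli1 list \<Rightarrow> bool" where
  "same_component G s t \<longleftrightarrow> s \<in> G \<and> t \<in> G \<and> (frust_edge G)\<^sup>*\<^sup>* s t"

text \<open>k-tilde^{A}_{C}: elements of K anticommuting with all b_i (i in A) and commuting with
  all b_j (j in C).\<close>
definition kset :: "pauli1 list set \<Rightarrow> (nat \<Rightarrow> pauli1 list) \<Rightarrow> nat set \<Rightarrow> nat set \<Rightarrow> pauli1 list set" where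
  "kset K b A C = {k \<in> K. (\<forall>i\<in>A. anticomm k (b i)) \<and> (\<forall>j\<in>C. \<not> anticomm k (b j))}"

end

theory Submission
  imports Defs
begin


lemma anticomm_Cons: "anticomm (a#s) (c#t) = (anticomm1 a c \<noteq> anticomm s t)"
  by (auto simp: anticomm_def)
lemma anticomm_Nil1[simp]: "\<not> anticomm [] t" by (simp add: anticomm_def)
lemma anticomm_Nil2[simp]: "\<not> anticomm s []" by (simp add: anticomm_def)
lemma pmult_Cons[simp]: "pmult (a#s) (c#t) = mult1 a c # pmult s t" by (simp add: pmult_def)
lemma pmult_Nil1[simp]: "pmult [] t = []" by (simp add: pmult_def)
lemma pmult_Nil2[simp]: "pmult s [] = []" by (simp add: pmult_def)
lemma length_pmult[simp]: "length (pmult s t) = min (length s) (length t)" by (simp add: pmult_def)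

lemma anticomm1_mult: "anticomm1 (mult1 a b) c = (anticomm1 a c \<noteq> anticomm1 b c)"
  by (cases a; cases b; cases c) (simp_all add: anticomm1_def)
lemma anticomm1_sym: "anticomm1 a b = anticomm1 b a" by (auto simp: anticomm1_def)
lemma mult1_comm: "mult1 a b = mult1 b a" by (cases a; cases b) simp_all
lemma mult1_assoc: "mult1 (mult1 a b) c = mult1 a (mult1 b c)" by (cases a; cases b; cases c) simp_all
lemma mult1_cancel: "mult1 a (mult1 a b) = b" by (cases a; cases b) simp_all

lemma anticomm_pmult:
  "length a = length b \<Longrightarrow> length b = length c \<Longrightarrow> anticomm (pmult a b) c = (anticomm a c \<noteq> anticomm b c)"
proof (induction a arbitrary: b c)
  case Nil then show ?case by simp
next
  case (Cons x a)
  then obtain y b' z c' where "b = y # b'" "c = z # c'" by (cases b; cases c) auto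
  with Cons show ?case by (auto simp: anticomm_Cons anticomm1_mult)
qed

lemma anticomm_sym: "anticomm a b = anticomm b a"
proof (induction a arbitrary: b)
  case Nil then show ?case by simp
next
  case (Cons x a) then show ?case by (cases b) (auto simp: anticomm_Cons anticomm1_sym)
qed

lemma anticomm_self[simp]: "\<not> anticomm a a"
  by (induction a) (auto simp: anticomm_Cons anticomm1_def)

lemma pmult_comm: "pmult a b = pmult b a"
proof (induction a arbitrary: b)
  case Nil then show ?case by simp
next
  case (Cons x a) then show ?case by (cases b) (auto simp: mult1_comm)
qed

lemma pmult_assoc: "pmult (pmult a b) c = pmult a (pmult b c)"
proof (induction a arbitrary: b c)
  case Nil then show ?case by simp
next
  case (Cons x a) then show ?case by (cases b; cases c) (auto simp: mult1_assoc)
qed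

lemma pmult_cancel: "length a = length b \<Longrightarrow> pmult a (pmult a b) = b"
proof (induction a arbitrary: b)
  case Nil then show ?case by simp
next
  case (Cons x a) then show ?case by (cases b) (auto simp: mult1_cancel)
qed



definition tv :: "pauli1 list \<Rightarrow> pauli1 list \<Rightarrow> pauli1 list" where
  "tv c x = (if anticomm x c then pmult c x else x)"

definition tr :: "nat \<Rightarrow> nat \<Rightarrow> nat \<Rightarrow> nat" where
  "tr p q i = (if i = p then q else if i = q then p else i)"

lemma tr_tr[simp]: "tr p q (tr p q i) = i" by (simp add: tr_def)
lemma inj_tr: "inj (tr p q)" by (metis injI tr_tr)

locale CS =
  fixes n d :: nat and K M :: "pauli1 list set" and b :: "nat \<Rightarrow> pauli1 list"
  assumes cartan: "pauli_cartan n K M"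
    and d2: "d \<ge> 2"
    and bM: "\<forall>i\<in>{1..d}. b i \<in> M"
    and binj: "inj_on b {1..d}"
    and bcomm: "\<forall>i\<in>{1..d}. \<forall>j\<in>{1..d}. \<not> anticomm (b i) (b j)"
    and bconn: "\<forall>i\<in>{1..d}. \<forall>j\<in>{1..d}. same_component (K \<union> M) (b i) (b j)"
    and noassoc: "\<forall>p\<in>{1..d}. \<forall>q\<in>{1..d}. \<forall>s\<in>{1..d}.
                    p \<noteq> q \<and> p \<noteq> s \<and> q \<noteq> s \<longrightarrow> pmult (pmult (b p) (b q)) (b s) \<notin> M"
begin

definition ac :: "pauli1 list \<Rightarrow> nat set" where
  "ac x = {i\<in>{1..d}. anticomm x (b i)}"

lemma lenK: "x \<in> K \<Longrightarrow> length x = n" using cartan by (auto simp: pauli_cartan_def is_pauli_def)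
lemma lenM: "x \<in> M \<Longrightarrow> length x = n" using cartan by (auto simp: pauli_cartan_def is_pauli_def)
lemma lenb: "i \<in> {1..d} \<Longrightarrow> length (b i) = n" using bM lenM by auto
lemma KK: "a \<in> K \<Longrightarrow> c \<in> K \<Longrightarrow> anticomm a c \<Longrightarrow> pmult a c \<in> K"
  using cartan by (auto simp: pauli_cartan_def)
lemma MM: "a \<in> M \<Longrightarrow> c \<in> M \<Longrightarrow> anticomm a c \<Longrightarrow> pmult a c \<in> K"
  using cartan by (auto simp: pauli_cartan_def)
lemma KM: "a \<in> K \<Longrightarrow> c \<in> M \<Longrightarrow> anticomm a c \<Longrightarrow> pmult a c \<in> M"
  using cartan by (auto simp: pauli_cartan_def)
lemma MK: "a \<in> M \<Longrightarrow> c \<in> K \<Longrightarrow> anticomm a c \<Longrightarrow> pmult a c \<in> M"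
  using KM[of c a] by (simp add: pmult_comm anticomm_sym)
lemma GG: "a \<in> K \<union> M \<Longrightarrow> c \<in> K \<union> M \<Longrightarrow> anticomm a c \<Longrightarrow> pmult a c \<in> K \<union> M"
  using KK MM KM MK by blast
lemma lenG: "x \<in> K \<union> M \<Longrightarrow> length x = n" using lenK lenM by blast
lemma bb: "i \<in> {1..d} \<Longrightarrow> j \<in> {1..d} \<Longrightarrow> \<not> anticomm (b i) (b j)" using bcomm by blast

lemma ac_pmult: "length x = n \<Longrightarrow> length y = n \<Longrightarrow>
   ac (pmult x y) = {i\<in>{1..d}. anticomm x (b i) \<noteq> anticomm y (b i)}"
  unfolding ac_def using anticomm_pmult lenb by auto

lemma ac_pmult_b: "length x = n \<Longrightarrow> p \<in> {1..d} \<Longrightarrow> ac (pmult x (b p)) = ac x"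
proof -
  assume a: "length x = n" "p \<in> {1..d}"
  have "ac (pmult x (b p)) = {i\<in>{1..d}. anticomm x (b i) \<noteq> anticomm (b p) (b i)}"
    using a lenb by (simp add: ac_pmult)
  also have "\<dots> = ac x" using bb[of p] a by (auto simp: ac_def)
  finally show ?thesis .
qed

lemma three:
  assumes k: "k \<in> K" and p: "p \<in> ac k" and q: "q \<in> ac k" and s: "s \<in> ac k"
    and pq: "p \<noteq> q" and ps: "p \<noteq> s" and qs: "q \<noteq> s"
  shows False
proof -
  have pd: "p \<in> {1..d}" and qd: "q \<in> {1..d}" and sd: "s \<in> {1..d}" using p q s by (auto simp: ac_def)
  have ap: "anticomm k (b p)" and aq: "anticomm k (b q)" and as: "anticomm k (b s)"
    using p q s by (auto simp: ac_def)
  have ln: "length k = n" "length (b p) = n" "length (b q) = n" "length (b s) = n"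
    using lenK k lenb pd qd sd by auto
  define k1 where "k1 = pmult k (b p)"
  have k1: "k1 \<in> M" unfolding k1_def using KM k bM pd ap by auto
  define k2 where "k2 = pmult k1 (b q)"
  have "anticomm k1 (b q)" unfolding k1_def using ln aq bb pd qd by (simp add: anticomm_pmult)
  hence k2: "k2 \<in> K" unfolding k2_def using MM k1 bM qd by auto
  define k3 where "k3 = pmult k2 (b s)"
  have "anticomm k2 (b s)" unfolding k2_def k1_def using ln as bb pd qd sd by (simp add: anticomm_pmult)
  hence k3: "k3 \<in> M" unfolding k3_def using KM k2 bM sd by auto
  have "anticomm k k3" unfolding k3_def k2_def k1_def using ln ap aq as
    by (simp add: anticomm_pmult anticomm_sym[of k])
  hence "pmult k k3 \<in> M" using KM k k3 by auto
  moreover have "pmult k k3 = pmult (pmult (b p) (b q)) (b s)"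
    unfolding k3_def k2_def k1_def using ln by (simp add: pmult_assoc pmult_cancel)
  ultimately show False using noassoc pd qd sd pq ps qs by auto
qed

lemma tvK: "c \<in> K \<Longrightarrow> x \<in> K \<Longrightarrow> tv c x \<in> K"
  unfolding tv_def using KK anticomm_sym by auto

lemma tv_tv: "length c = length x \<Longrightarrow> tv c (tv c x) = x"
proof -
  assume l: "length c = length x"
  show ?thesis
  proof (cases "anticomm x c")
    case True
    have "anticomm (pmult c x) c" using l True by (simp add: anticomm_pmult)
    thus ?thesis using True l unfolding tv_def by (simp add: pmult_cancel)
  qed (simp add: tv_def)
qed

lemma anticomm_tv: "length c = length x \<Longrightarrow> length x = length y \<Longrightarrow>
   anticomm (tv c x) y = (anticomm x y \<noteq> (anticomm x c \<and> anticomm c y))"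
  unfolding tv_def by (auto simp: anticomm_pmult)

lemma length_tv[simp]: "length c = length x \<Longrightarrow> length (tv c x) = length x"
  by (simp add: tv_def)

lemma tv_bij: "c \<in> K \<Longrightarrow> bij_betw (tv c) K K"
  by (rule bij_betw_byWitness[where f'="tv c"]) (auto simp: tvK tv_tv lenK)

lemma swap:
  assumes pd: "p \<in> {1..d}" and qd: "q \<in> {1..d}" and pq: "p \<noteq> q"
    and k0: "k0 \<in> K" and ack0: "ac k0 = {p,q}"
  shows "\<exists>\<sigma>. bij_betw \<sigma> K K \<and> (\<forall>x\<in>K. ac (\<sigma> x) = tr p q ` ac x)"
proof -
  have ln: "length k0 = n" "length (b p) = n" "length (b q) = n"
    using lenK k0 lenb pd qd by auto
  have a0: "\<And>i. i \<in> {1..d} \<Longrightarrow> anticomm k0 (b i) = (i = p \<or> i = q)"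
    using ack0 unfolding ac_def by blast
  define k1 where "k1 = pmult (pmult k0 (b p)) (b q)"
  have "pmult k0 (b p) \<in> M" using KM k0 bM pd a0[OF pd] by auto
  moreover have "anticomm (pmult k0 (b p)) (b q)" using ln a0[OF qd] bb[OF pd qd] by (simp add: anticomm_pmult)
  ultimately have k1: "k1 \<in> K" unfolding k1_def using MM bM qd by auto
  have lk1: "length k1 = n" using k1 lenK by auto
  have a1: "\<And>i. i \<in> {1..d} \<Longrightarrow> anticomm k1 (b i) = (i = p \<or> i = q)"
  proof -
    fix i assume i: "i \<in> {1..d}"
    show "anticomm k1 (b i) = (i = p \<or> i = q)"
      unfolding k1_def using ln lenb[OF i] a0[OF i] bb[OF pd i] bb[OF qd i] by (simp add: anticomm_pmult)
  qed
  have x01: "\<And>x. length x = n \<Longrightarrow> anticomm x k1 = (anticomm x k0 \<noteq> (anticomm x (b p) \<noteq> anticomm x (b q)))"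
  proof -
    fix x :: "pauli1 list" assume lx: "length x = n"
    have "anticomm x k1 = anticomm k1 x" by (rule anticomm_sym)
    also have "\<dots> = (anticomm k0 x \<noteq> (anticomm (b p) x \<noteq> anticomm (b q) x))"
      unfolding k1_def using ln lx by (auto simp add: anticomm_pmult)
    finally show "anticomm x k1 = (anticomm x k0 \<noteq> (anticomm x (b p) \<noteq> anticomm x (b q)))"
      by (metis anticomm_sym)
  qed
  have k01: "\<not> anticomm k0 k1" using x01[OF ln(1)] a0[OF pd] a0[OF qd] pq by simp
  define \<sigma> where "\<sigma> = tv k1 \<circ> tv k0"
  have bij: "bij_betw \<sigma> K K" unfolding \<sigma>_def using tv_bij k0 k1 bij_betw_trans by blast
  have key: "anticomm (\<sigma> x) (b i) = anticomm x (b (tr p q i))" if x: "x \<in> K" and i: "i \<in> {1..d}" for x i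
  proof -
    have lx: "length x = n" using x lenK by auto
    have e1: "anticomm (\<sigma> x) (b i) = (anticomm (tv k0 x) (b i) \<noteq> (anticomm (tv k0 x) k1 \<and> anticomm k1 (b i)))"
      unfolding \<sigma>_def using lx ln lk1 lenb[OF i] by (simp add: anticomm_tv)
    have e2: "anticomm (tv k0 x) (b i) = (anticomm x (b i) \<noteq> (anticomm x k0 \<and> anticomm k0 (b i)))"
      using lx ln lenb[OF i] by (simp add: anticomm_tv)
    have e3: "anticomm (tv k0 x) k1 = (anticomm x k1 \<noteq> (anticomm x k0 \<and> anticomm k0 k1))"
      using lx ln lk1 by (simp add: anticomm_tv)
    have e4: "anticomm (\<sigma> x) (b i) = ((anticomm x (b i) \<noteq> (anticomm x k0 \<and> (i = p \<or> i = q))) \<noteq> ((anticomm x k0 \<noteq> (anticomm x (b p) \<noteq> anticomm x (b q))) \<and> (i = p \<or> i = q)))"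
      unfolding e1 e2 e3 x01[OF lx] a1[OF i] a0[OF i] using k01 by simp
    show ?thesis
    proof (cases "i = p")
      case True thus ?thesis using e4 pq by (auto simp add: tr_def)
    next
      case False
      thus ?thesis using e4 pq by (cases "i = q") (auto simp add: tr_def)
    qed
  qed
  have "ac (\<sigma> x) = tr p q ` ac x" if x: "x \<in> K" for x
  proof
    have trd: "\<And>i. i \<in> {1..d} \<Longrightarrow> tr p q i \<in> {1..d}" using pd qd by (auto simp: tr_def)
    show "ac (\<sigma> x) \<subseteq> tr p q ` ac x"
    proof
      fix i assume "i \<in> ac (\<sigma> x)"
      hence i: "i \<in> {1..d}" "anticomm (\<sigma> x) (b i)" by (auto simp: ac_def)
      hence "tr p q i \<in> ac x" using key[OF x i(1)] trd by (auto simp: ac_def)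
      thus "i \<in> tr p q ` ac x" by (metis image_eqI tr_tr)
    qed
    show "tr p q ` ac x \<subseteq> ac (\<sigma> x)"
    proof
      fix i assume "i \<in> tr p q ` ac x"
      then obtain j where j: "j \<in> ac x" "i = tr p q j" by auto
      hence "j \<in> {1..d}" "anticomm x (b j)" by (auto simp: ac_def)
      thus "i \<in> ac (\<sigma> x)" using key[OF x, of i] trd j by (auto simp: ac_def)
    qed
  qed
  with bij show ?thesis by blast
qed

definition f :: "nat set \<Rightarrow> nat" where "f X = card {k\<in>K. ac k = X}"

lemma f_swap:
  assumes pd: "p \<in> {1..d}" and qd: "q \<in> {1..d}" and pq: "p \<noteq> q"
    and k0: "k0 \<in> K" and ack0: "ac k0 = {p,q}"
  shows "f X = f (tr p q ` X)"
proof -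
  obtain \<sigma> where bij: "bij_betw \<sigma> K K" and s: "\<forall>x\<in>K. ac (\<sigma> x) = tr p q ` ac x"
    using swap[OF assms] by blast
  have img: "\<sigma> ` {k\<in>K. ac k = X} = {k\<in>K. ac k = tr p q ` X}"
  proof
    show "\<sigma> ` {k\<in>K. ac k = X} \<subseteq> {k\<in>K. ac k = tr p q ` X}"
    proof
      fix y assume "y \<in> \<sigma> ` {k\<in>K. ac k = X}"
      then obtain k where k: "k \<in> K" "ac k = X" "y = \<sigma> k" by blast
      have "y \<in> K" using bij_betw_apply[OF bij k(1)] k(3) by simp
      moreover have "ac y = tr p q ` X" using s k by simp
      ultimately show "y \<in> {k\<in>K. ac k = tr p q ` X}" by simp
    qed
    show "{k\<in>K. ac k = tr p q ` X} \<subseteq> \<sigma> ` {k\<in>K. ac k = X}"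
    proof
      fix k assume k: "k \<in> {k\<in>K. ac k = tr p q ` X}"
      then obtain k' where k': "k' \<in> K" "k = \<sigma> k'" using bij_betw_imp_surj_on[OF bij] by blast
      have e: "ac (\<sigma> k') = tr p q ` ac k'" using s k'(1) by blast
      have "ac k = tr p q ` X" using k by blast
      hence "tr p q ` ac k' = tr p q ` X" using e k'(2) by simp
      hence "ac k' = X" by (metis inj_image_eq_iff inj_tr)
      thus "k \<in> \<sigma> ` {k\<in>K. ac k = X}" using k' by blast
    qed
  qed
  have sub: "{k\<in>K. ac k = X} \<subseteq> K" by blast
  have "bij_betw \<sigma> {k\<in>K. ac k = X} {k\<in>K. ac k = tr p q ` X}"
    by (rule bij_betw_subset[OF bij sub img])
  thus ?thesis unfolding f_def by (rule bij_betw_same_card)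
qed


lemma ac_sub: "ac x \<subseteq> {1..d}" by (auto simp: ac_def)

lemma separation:
  assumes PQ: "P \<union> Q = {1..d}" "P \<inter> Q = {}"
    and noT: "\<forall>k\<in>K. \<forall>p\<in>P. \<forall>q\<in>Q. ac k \<noteq> {p,q}"
    and p: "p \<in> P" and q: "q \<in> Q"
  shows False
proof -
  have kcase: "ac k \<inter> P = {} \<or> ac k \<inter> Q = {}" if k: "k \<in> K" for k
  proof (rule ccontr)
    assume "\<not> (ac k \<inter> P = {} \<or> ac k \<inter> Q = {})"
    then obtain p' q' where p': "p' \<in> ac k" "p' \<in> P" and q': "q' \<in> ac k" "q' \<in> Q" by blast
    have pq': "p' \<noteq> q'" using p' q' PQ by blast
    have "ac k = {p',q'}"
    proof
      show "ac k \<subseteq> {p',q'}"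
      proof
        fix s assume s: "s \<in> ac k"
        show "s \<in> {p',q'}"
        proof (rule ccontr)
          assume "s \<notin> {p',q'}"
          thus False using three[OF k p'(1) q'(1) s] pq' by auto
        qed
      qed
      show "{p',q'} \<subseteq> ac k" using p' q' by auto
    qed
    thus False using noT k p' q' by blast
  qed
  have star: "ac x \<inter> P = {} \<or> ac x \<inter> Q = {}" if x: "x \<in> K \<union> M" for x
  proof (cases "x \<in> K")
    case True thus ?thesis using kcase by blast
  next
    case False
    hence xM: "x \<in> M" using x by blast
    show ?thesis
    proof (cases "ac x = {}")
      case True thus ?thesis by blast
    next
      case False
      then obtain p0 where p0: "p0 \<in> ac x" by blast
      hence p0d: "p0 \<in> {1..d}" and ap: "anticomm x (b p0)" by (auto simp: ac_def)
      have "pmult x (b p0) \<in> K" using MM xM bM p0d ap by auto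
      moreover have "ac (pmult x (b p0)) = ac x" using ac_pmult_b lenM xM p0d by auto
      ultimately show ?thesis using kcase by metis
    qed
  qed
  define tP where "tP x \<longleftrightarrow> ac x \<noteq> {} \<and> ac x \<inter> Q = {}" for x
  define tQ where "tQ x \<longleftrightarrow> ac x \<noteq> {} \<and> ac x \<inter> P = {}" for x
  have cls: "ac x = {} \<or> tP x \<or> tQ x" if "x \<in> K \<union> M" for x
    using star[OF that] unfolding tP_def tQ_def by blast
  have PQc: "\<not> anticomm x y" if x: "x \<in> K \<union> M" and y: "y \<in> K \<union> M" and tx: "tP x" and ty: "tQ y" for x y
  proof
    assume a: "anticomm x y"
    have z: "pmult x y \<in> K \<union> M" using GG x y a by blast
    have acz: "ac (pmult x y) = {i\<in>{1..d}. anticomm x (b i) \<noteq> anticomm y (b i)}"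
      using ac_pmult lenG x y by blast
    obtain i where i: "i \<in> ac x" using tx unfolding tP_def by blast
    obtain j where j: "j \<in> ac y" using ty unfolding tQ_def by blast
    have iP: "i \<in> P" using i tx ac_sub PQ unfolding tP_def by blast
    have jQ: "j \<in> Q" using j ty ac_sub PQ unfolding tQ_def by blast
    have "i \<notin> ac y" using iP ty unfolding tQ_def by blast
    hence "i \<in> ac (pmult x y)" using i acz by (auto simp: ac_def)
    moreover have "j \<notin> ac x" using jQ tx unfolding tP_def by blast
    hence "j \<in> ac (pmult x y)" using j acz by (auto simp: ac_def)
    ultimately show False using star[OF z] iP jQ by blast
  qed
  have Cc: "pmult y x \<in> K \<union> M \<and> tQ (pmult y x)"
    if y: "y \<in> K \<union> M" and x: "x \<in> K \<union> M" and ty: "ac y = {}" and tx: "tQ x" and a: "anticomm y x" for x y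
  proof
    show "pmult y x \<in> K \<union> M" using GG x y a by blast
    have "ac (pmult y x) = {i\<in>{1..d}. anticomm y (b i) \<noteq> anticomm x (b i)}"
      using ac_pmult lenG x y by blast
    also have "\<dots> = ac x" using ty by (auto simp: ac_def)
    finally show "tQ (pmult y x)" using tx unfolding tQ_def by simp
  qed
  let ?E = "frust_edge (K \<union> M)"
  have path: "\<forall>w x. w \<in> K \<union> M \<longrightarrow> x \<in> K \<union> M \<longrightarrow> tP w \<longrightarrow> tQ x \<longrightarrow> \<not> (?E ^^ m) w x" for m
  proof (induction m rule: less_induct)
    case (less m)
    show ?case
    proof (intro allI impI)
      fix w x assume w: "w \<in> K \<union> M" and x: "x \<in> K \<union> M" and tw: "tP w" and tx: "tQ x"
      show "\<not> (?E ^^ m) w x"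
      proof
        assume pth: "(?E ^^ m) w x"
        show False
        proof (cases m)
          case 0
          hence "w = x" using pth by simp
          thus False using tw tx ac_sub PQ unfolding tP_def tQ_def by blast
        next
          case (Suc m')
          then obtain y where wy: "(?E ^^ m') w y" and yx: "?E y x" using pth relpowp_Suc_E by metis
          have y: "y \<in> K \<union> M" and ayx: "anticomm y x" using yx by (auto simp: frust_edge_def)
          show False
          proof (cases m')
            case 0
            hence "w = y" using wy by simp
            thus False using PQc[OF w x tw tx] ayx by simp
          next
            case (Suc m'')
            then obtain u where wu: "(?E ^^ m'') w u" and uy: "?E u y" using wy relpowp_Suc_E by metis
            have u: "u \<in> K \<union> M" and auy: "anticomm u y" using uy by (auto simp: frust_edge_def)
            consider "tQ y" | "tP y" | "ac y = {}" using cls[OF y] by blast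
            then show False
            proof cases
              case 1 thus False using less[of m'] \<open>m = Suc m'\<close> w y tw wy by blast
            next
              case 2
              have "(?E ^^ Suc 0) y x" using yx by (simp only: relpowp_Suc_0)
              thus False using less[of "Suc 0"] \<open>m = Suc m'\<close> \<open>m' = Suc m''\<close> y x 2 tx by auto
            next
              case 3
              have z: "pmult y x \<in> K \<union> M" and tz: "tQ (pmult y x)" using Cc[OF y x 3 tx ayx] by auto
              show False
              proof (cases "anticomm u x")
                case True
                hence "?E u x" using u x by (simp add: frust_edge_def)
                hence "(?E ^^ Suc m'') w x" using wu relpowp_Suc_I by metis
                thus False using less[of "Suc m''"] \<open>m = Suc m'\<close> \<open>m' = Suc m''\<close> w x tw tx by auto
              next
                case False
                have "anticomm u (pmult y x) = (anticomm (pmult y x) u)" by (rule anticomm_sym)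
                also have "\<dots> = (anticomm y u \<noteq> anticomm x u)" using lenG u x y by (simp add: anticomm_pmult)
                finally have "anticomm u (pmult y x)" using False auy by (metis anticomm_sym)
                hence "?E u (pmult y x)" using u z by (simp add: frust_edge_def)
                hence "(?E ^^ Suc m'') w (pmult y x)" using wu relpowp_Suc_I by metis
                thus False using less[of "Suc m''"] \<open>m = Suc m'\<close> \<open>m' = Suc m''\<close> w z tw tz by auto
              qed
            qed
          qed
        qed
      qed
    qed
  qed
  have pd: "p \<in> {1..d}" and qd: "q \<in> {1..d}" using p q PQ by auto
  have pq: "p \<noteq> q" using p q PQ by auto
  have bpq: "b p \<noteq> b q" using binj pd qd pq by (auto dest: inj_onD)
  have "(?E)\<^sup>*\<^sup>* (b p) (b q)" using bconn pd qd by (auto simp: same_component_def)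
  then obtain z1 where e1: "?E (b p) z1" and r1: "(?E)\<^sup>*\<^sup>* z1 (b q)"
    using bpq by (metis converse_rtranclpE)
  show False
  proof (cases "z1 = b q")
    case True thus False using e1 bb[OF pd qd] by (simp add: frust_edge_def)
  next
    case False
    then obtain y where r2: "(?E)\<^sup>*\<^sup>* z1 y" and e2: "?E y (b q)" using r1 by (metis rtranclp.cases)
    have z1: "z1 \<in> K \<union> M" and az1: "anticomm z1 (b p)" using e1 by (auto simp: frust_edge_def anticomm_sym)
    have y: "y \<in> K \<union> M" and ay: "anticomm y (b q)" using e2 by (auto simp: frust_edge_def)
    have "p \<in> ac z1" using az1 pd by (simp add: ac_def)
    hence tz: "tP z1" using star[OF z1] p unfolding tP_def by blast
    have "q \<in> ac y" using ay qd by (simp add: ac_def)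
    hence ty: "tQ y" using star[OF y] q unfolding tQ_def by blast
    obtain m where "(?E ^^ m) z1 y" using rtranclp_imp_relpowp[OF r2] by blast
    thus False using path z1 y tz ty by blast
  qed
qed


lemma one_d: "1 \<in> {1..d}" using d2 by auto

lemma allT1:
  assumes qd: "q \<in> {1..d}" and q1: "q \<noteq> 1"
  shows "\<exists>k\<in>K. ac k = {1,q}"
proof (rule ccontr)
  assume nq: "\<not> (\<exists>k\<in>K. ac k = {1,q})"
  define P where "P = {p\<in>{1..d}. p = 1 \<or> (\<exists>k\<in>K. ac k = {1,p})}"
  define Q where "Q = {1..d} - P"
  have Psub: "P \<subseteq> {1..d}" unfolding P_def by blast
  have PQ: "P \<union> Q = {1..d}" "P \<inter> Q = {}" using Psub unfolding Q_def by blast+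
  have 1: "1 \<in> P" using one_d unfolding P_def by auto
  have "q \<notin> P" using nq q1 unfolding P_def by blast
  hence qQ: "q \<in> Q" using qd unfolding Q_def by blast
  have noT: "\<forall>k\<in>K. \<forall>p\<in>P. \<forall>q\<in>Q. ac k \<noteq> {p,q}"
  proof (intro ballI notI)
    fix k p' q' assume k: "k \<in> K" and p': "p' \<in> P" and q': "q' \<in> Q" and e: "ac k = {p',q'}"
    have pd: "p' \<in> {1..d}" and qd': "q' \<in> {1..d}" and pq: "p' \<noteq> q'" and q'1: "q' \<noteq> 1"
      using p' q' PQ 1 by auto
    show False
    proof (cases "p' = 1")
      case True
      hence "q' \<in> P" using k e qd' unfolding P_def by blast
      thus False using q' PQ by blast
    next
      case False
      then obtain k' where k': "k' \<in> K" "ac k' = {1,p'}" using p' unfolding P_def by auto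
      obtain \<sigma> where bij: "bij_betw \<sigma> K K" and s: "\<forall>x\<in>K. ac (\<sigma> x) = tr p' q' ` ac x"
        using swap[OF pd qd' pq k e] by blast
      have "\<sigma> k' \<in> K" using bij k'(1) bij_betw_apply by metis
      moreover have "ac (\<sigma> k') = tr p' q' ` {1,p'}" using s k' by blast
      moreover have "tr p' q' ` {1,p'} = {1,q'}" using False q'1 by (auto simp: tr_def)
      ultimately have "q' \<in> P" using qd' unfolding P_def by auto
      thus False using q' PQ by blast
    qed
  qed
  show False using separation[OF PQ noT 1 qQ] .
qed

lemma allT:
  assumes pd: "p \<in> {1..d}" and qd: "q \<in> {1..d}" and pq: "p \<noteq> q"
  shows "\<exists>k\<in>K. ac k = {p,q}"
proof -
  consider "p = 1" | "q = 1" | "p \<noteq> 1 \<and> q \<noteq> 1" by blast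
  then show ?thesis
  proof cases
    case 1 thus ?thesis using allT1[OF qd] pq by auto
  next
    case 2 thus ?thesis using allT1[OF pd] pq by (auto simp: insert_commute)
  next
    case 3
    obtain k where k: "k \<in> K" "ac k = {1,q}" using allT1[OF qd] 3 by auto
    obtain k' where k': "k' \<in> K" "ac k' = {1,p}" using allT1[OF pd] 3 by auto
    obtain \<sigma> where bij: "bij_betw \<sigma> K K" and s: "\<forall>x\<in>K. ac (\<sigma> x) = tr 1 p ` ac x"
      using swap[OF one_d pd _ k'] 3 by metis
    have "\<sigma> k \<in> K" using bij k(1) bij_betw_apply by metis
    moreover have "ac (\<sigma> k) = tr 1 p ` {1,q}" using s k by blast
    moreover have "tr 1 p ` {1,q} = {p,q}" using 3 pq by (auto simp: tr_def)
    ultimately show ?thesis by auto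
  qed
qed

lemma f_tr: "p \<in> {1..d} \<Longrightarrow> q \<in> {1..d} \<Longrightarrow> p \<noteq> q \<Longrightarrow> f X = f (tr p q ` X)"
  using allT f_swap by metis

lemma fsing: "r \<in> {1..d} \<Longrightarrow> f {r} = f {1}"
proof (cases "r = 1")
  case False
  assume r: "r \<in> {1..d}"
  have "f {1} = f (tr 1 r ` {1})" using f_tr[OF one_d r] False by metis
  thus ?thesis by (simp add: tr_def)
qed simp

lemma fpair: assumes r: "r \<in> {1..d}" and q: "q \<in> {1..d}" and rq: "r < q" shows "f {r,q} = f {1,2}"
proof -
  have a: "f {r,q} = f {1,q}"
  proof (cases "r = 1")
    case False
    have "f {r,q} = f (tr 1 r ` {r,q})" using f_tr[OF one_d r] False by metis
    also have "tr 1 r ` {r,q} = {1,q}" using False rq r by (auto simp: tr_def)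
    finally show ?thesis .
  qed simp
  have d2': "2 \<in> {1..d}" using d2 by auto
  have b: "f {1,q} = f {1,2}"
  proof (cases "q = 2")
    case False
    have "f {1,q} = f (tr 2 q ` {1,q})" using f_tr[OF d2' q] False by metis
    also have "tr 2 q ` {1,q} = {1,2}" using False rq r by (auto simp: tr_def)
    finally show ?thesis .
  qed simp
  show ?thesis using a b by simp
qed

lemma finK: "finite K"
proof -
  have u: "(UNIV :: pauli1 set) = {PI,PX,PY,PZ}" using pauli1.exhaust by auto
  have fu: "finite (UNIV :: pauli1 set)" by (simp add: u)
  have "finite {s :: pauli1 list. set s \<subseteq> UNIV \<and> length s = n}" by (rule finite_lists_length_eq[OF fu])
  moreover have "K \<subseteq> {s. set s \<subseteq> UNIV \<and> length s = n}" using lenK by auto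
  ultimately show ?thesis by (rule finite_subset[rotated])
qed


lemma kset_eq: "A \<subseteq> {1..d} \<Longrightarrow> C \<subseteq> {1..d} \<Longrightarrow> kset K b A C = {k\<in>K. A \<subseteq> ac k \<and> C \<inter> ac k = {}}"
  unfolding kset_def ac_def by blast

lemma kset1: "kset K b {1} {2..d} = {k\<in>K. ac k = {1}}"
proof -
  have "kset K b {1} {2..d} = {k\<in>K. {1} \<subseteq> ac k \<and> {2..d} \<inter> ac k = {}}"
    using one_d by (intro kset_eq) auto
  also have "\<dots> = {k\<in>K. ac k = {1}}"
  proof (intro Collect_cong conj_cong refl)
    fix k
    have s: "ac k \<subseteq> {1..d}" by (rule ac_sub)
    show "({1} \<subseteq> ac k \<and> {2..d} \<inter> ac k = {}) = (ac k = {1})"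
    proof
      assume a: "{1} \<subseteq> ac k \<and> {2..d} \<inter> ac k = {}"
      have "x = 1" if "x \<in> ac k" for x
      proof -
        have "x \<in> {1..d}" using s that by blast
        moreover have "x \<notin> {2..d}" using a that by blast
        ultimately show ?thesis by simp
      qed
      thus "ac k = {1}" using a by blast
    next
      assume "ac k = {1}" thus "{1} \<subseteq> ac k \<and> {2..d} \<inter> ac k = {}" by simp
    qed
  qed
  finally show ?thesis .
qed

lemma kset12: "kset K b {1,2} {3..d} = {k\<in>K. ac k = {1,2}}"
proof -
  have "kset K b {1,2} {3..d} = {k\<in>K. {1,2} \<subseteq> ac k \<and> {3..d} \<inter> ac k = {}}"
    using d2 by (intro kset_eq) auto
  also have "\<dots> = {k\<in>K. ac k = {1,2}}"
  proof (intro Collect_cong conj_cong refl)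
    fix k
    have s: "ac k \<subseteq> {1..d}" by (rule ac_sub)
    show "({1,2} \<subseteq> ac k \<and> {3..d} \<inter> ac k = {}) = (ac k = {1,2})"
    proof
      assume a: "{1,2} \<subseteq> ac k \<and> {3..d} \<inter> ac k = {}"
      have "x = 1 \<or> x = 2" if "x \<in> ac k" for x
      proof -
        have "x \<in> {1..d}" using s that by blast
        moreover have "x \<notin> {3..d}" using a that by blast
        ultimately show ?thesis by auto
      qed
      thus "ac k = {1,2}" using a by blast
    next
      assume "ac k = {1,2}" thus "{1,2} \<subseteq> ac k \<and> {3..d} \<inter> ac k = {}" by simp
    qed
  qed
  finally show ?thesis .
qed

lemma ksetr: assumes r: "r \<in> {1..d}"
  shows "kset K b {r} {1..<r} = {k\<in>K. ac k = {r}} \<union> (\<Union>q\<in>{r<..d}. {k\<in>K. ac k = {r,q}})"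
proof -
  have "kset K b {r} {1..<r} = {k\<in>K. {r} \<subseteq> ac k \<and> {1..<r} \<inter> ac k = {}}"
    using r by (intro kset_eq) auto
  also have "\<dots> = {k\<in>K. ac k = {r}} \<union> (\<Union>q\<in>{r<..d}. {k\<in>K. ac k = {r,q}})"
  proof
    show "{k\<in>K. {r} \<subseteq> ac k \<and> {1..<r} \<inter> ac k = {}} \<subseteq> {k\<in>K. ac k = {r}} \<union> (\<Union>q\<in>{r<..d}. {k\<in>K. ac k = {r,q}})"
    proof
      fix k assume k: "k \<in> {k\<in>K. {r} \<subseteq> ac k \<and> {1..<r} \<inter> ac k = {}}"
      have s: "ac k \<subseteq> {1..d}" by (rule ac_sub)
      show "k \<in> {k\<in>K. ac k = {r}} \<union> (\<Union>q\<in>{r<..d}. {k\<in>K. ac k = {r,q}})"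
      proof (cases "ac k = {r}")
        case True thus ?thesis using k by blast
      next
        case False
        then obtain q where q: "q \<in> ac k" "q \<noteq> r" using k by blast
        have qd: "q \<in> {1..d}" using s q by blast
        have "q \<notin> {1..<r}" using k q by blast
        hence qr: "q \<in> {r<..d}" using qd q(2) by auto
        have "ac k = {r,q}"
        proof
          show "{r,q} \<subseteq> ac k" using k q by blast
          show "ac k \<subseteq> {r,q}"
          proof
            fix x assume x: "x \<in> ac k"
            show "x \<in> {r,q}"
            proof (rule ccontr)
              assume "x \<notin> {r,q}"
              moreover have "r \<in> ac k" using k by blast
              ultimately show False using three[of k r q x] k q x by auto
            qed
          qed
        qed
        thus ?thesis using k qr by blast
      qed
    qed
    show "{k\<in>K. ac k = {r}} \<union> (\<Union>q\<in>{r<..d}. {k\<in>K. ac k = {r,q}}) \<subseteq> {k\<in>K. {r} \<subseteq> ac k \<and> {1..<r} \<inter> ac k = {}}"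
      by auto
  qed
  finally show ?thesis .
qed

lemma main: assumes r: "r \<in> {1..d}"
  shows "card (kset K b {r} {1..<r}) = card (kset K b {1} {2..d}) + (d - r) * card (kset K b {1, 2} {3..d})"
proof -
  have fin: "finite {k\<in>K. P k}" for P using finK by auto
  have disj1: "{k\<in>K. ac k = {r}} \<inter> (\<Union>q\<in>{r<..d}. {k\<in>K. ac k = {r,q}}) = {}" by auto
  have "card (kset K b {r} {1..<r}) = card {k\<in>K. ac k = {r}} + card (\<Union>q\<in>{r<..d}. {k\<in>K. ac k = {r,q}})"
    unfolding ksetr[OF r] by (rule card_Un_disjoint) (auto simp: fin disj1)
  also have "card (\<Union>q\<in>{r<..d}. {k\<in>K. ac k = {r,q}}) = (\<Sum>q\<in>{r<..d}. card {k\<in>K. ac k = {r,q}})"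
    by (rule card_UN_disjoint) (auto simp: fin doubleton_eq_iff)
  also have "\<dots> = (\<Sum>q\<in>{r<..d}. f {1,2})"
  proof (rule sum.cong[OF refl])
    fix q assume "q \<in> {r<..d}"
    hence "f {r,q} = f {1,2}" using fpair[OF r] r by auto
    thus "card {k\<in>K. ac k = {r,q}} = f {1,2}" by (simp add: f_def)
  qed
  also have "\<dots> = (d - r) * f {1,2}" by simp
  finally have X: "card (kset K b {r} {1..<r}) = card {k\<in>K. ac k = {r}} + (d - r) * f {1,2}" .
  show ?thesis unfolding kset1 kset12 X using fsing[OF r] by (simp add: f_def)
qed

end

theorem theoremC3:
  fixes n d :: nat and K M :: "pauli1 list set" and b :: "nat \<Rightarrow> pauli1 list"
  assumes cartan: "pauli_cartan n K M"
    and d2: "d \<ge> 2"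
    and bM: "\<forall>i\<in>{1..d}. b i \<in> M"
    and binj: "inj_on b {1..d}"
    and bcomm: "\<forall>i\<in>{1..d}. \<forall>j\<in>{1..d}. \<not> anticomm (b i) (b j)"
    and bconn: "\<forall>i\<in>{1..d}. \<forall>j\<in>{1..d}. same_component (K \<union> M) (b i) (b j)"
    and noassoc: "\<forall>p\<in>{1..d}. \<forall>q\<in>{1..d}. \<forall>s\<in>{1..d}.
                    p \<noteq> q \<and> p \<noteq> s \<and> q \<noteq> s \<longrightarrow> pmult (pmult (b p) (b q)) (b s) \<notin> M"
  shows "\<forall>r\<in>{1..d}. card (kset K b {r} {1..<r})
           = card (kset K b {1} {2..d}) + (d - r) * card (kset K b {1, 2} {3..d})"
proof -
  interpret CS n d K M b using assms by unfold_locales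
  show ?thesis using main by blast
qed

end
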